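(* Let $E$ be a Banach space and let $G:E\times\mathbb{R}\to E\times\mathbb{R}$, $G(e,t)=(e,g(e,t))$, be a continuous proper map. Suppose that no point of $E\times\mathbb{R}$ has three preimages under $G$. If some point has two preimages, then $G$ is a global fold, that is, there are homeomorphisms $\sigma_1,\sigma_2:E\times\mathbb{R}\to E\times\mathbb{R}$ of the form $\sigma_1(e,t)=(e,g_1(e,t))$, $\sigma_2(e,t)=(e,g_2(e,t))$ such that $(\sigma_2\circ G\circ\sigma_1)(e,t)=(e,-|t|)$ for all $(e,t)$. Otherwise, $G$ is a homeomorphism.
   Context: A continuous map is proper if preimages of compact sets are compact. *)

theory Defs
  imports "HOL-Analysis.Analysis"
begin

definition proper_cont_map :: "('a::topological_space \<Rightarrow> 'b::topological_space) \<Rightarrow> bool" where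
  "proper_cont_map f \<longleftrightarrow> continuous_on UNIV f \<and> (\<forall>K. compact K \<longrightarrow> compact (f -` K))"

definition fibre_map :: "('a \<times> real \<Rightarrow> real) \<Rightarrow> 'a \<times> real \<Rightarrow> 'a \<times> real" where
  "fibre_map h = (\<lambda>(e,t). (e, h (e,t)))"

definition is_homeo :: "('a::topological_space \<Rightarrow> 'b::topological_space) \<Rightarrow> bool" where
  "is_homeo f \<longleftrightarrow> (\<exists>f'. homeomorphism UNIV UNIV f f')"

definition global_fold :: "('a::real_normed_vector \<times> real \<Rightarrow> 'a \<times> real) \<Rightarrow> bool" where
  "global_fold G \<longleftrightarrow> (\<exists>g1 g2. is_homeo (fibre_map g1) \<and> is_homeo (fibre_map g2) \<and>
      (\<forall>e t. (fibre_map g2 \<circ> G \<circ> fibre_map g1) (e,t) = (e, - \<bar>t\<bar>)))"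

end

theory Submission
  imports Defs
begin

lemma fm_apply[simp]: "fibre_map h (e,t) = (e, h (e,t))" by (simp add: fibre_map_def)
lemma fm_fst[simp]: "fst (fibre_map h x) = fst x" by (cases x) simp
lemma fm_snd[simp]: "snd (fibre_map h x) = h x" by (cases x) simp
lemma fm_eq: "fibre_map h = (\<lambda>x. (fst x, h x))" by (auto simp: fibre_map_def)

lemma proper_closed:
  fixes f :: "'a::metric_space \<Rightarrow> 'b::metric_space"
  assumes "continuous_on UNIV f" "\<And>K. compact K \<Longrightarrow> compact (f -` K)" "closed C"
  shows "closed (f ` C)"
proof -
  have "proper_map euclidean euclidean f"
    apply (rule compact_imp_proper_map)
    using assms by (auto simp: k_space_euclideanreal Hausdorff_imp_kc_space vimage_def)
  then have "closed_map euclidean euclidean f" by (rule proper_imp_closed_map)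
  then show ?thesis using assms(3) by (auto simp: closed_map_def)
qed

lemma homeo_of_proper_bij:
  fixes f :: "'a::metric_space \<Rightarrow> 'a"
  assumes c: "continuous_on UNIV f" and p: "\<And>K. compact K \<Longrightarrow> compact (f -` K)" and b: "bij f"
  shows "is_homeo f"
proof -
  have ci: "continuous_on UNIV (inv f)"
    unfolding continuous_on_closed_vimage[OF closed_UNIV]
  proof (intro allI impI)
    fix B :: "'a set" assume "closed B"
    have "inv f -` B \<inter> UNIV = f ` B"
      using b by (auto simp: bij_def inv_f_f surj_f_inv_f image_iff) (metis surj_f_inv_f)
    then show "closed (inv f -` B \<inter> UNIV)" using proper_closed[OF c p \<open>closed B\<close>] by simp
  qed
  have s: "surj f" "inj f" using b by (auto simp: bij_def)
  have "inv f ` UNIV = UNIV" using s by (metis inj_imp_surj_inv)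
  then show ?thesis unfolding is_homeo_def homeomorphism_def
    using s c ci by (intro exI[of _ "inv f"]) (auto simp: inv_f_f surj_f_inv_f)
qed

lemma ivt_between:
  fixes h :: "real \<Rightarrow> real"
  assumes hc: "continuous_on UNIV h" and ab: "a < b"
    and v: "(h a < v \<and> v < h b) \<or> (h b < v \<and> v < h a)"
  shows "\<exists>c. a < c \<and> c < b \<and> h c = v"
proof -
  have c: "continuous_on {a..b} h" using hc continuous_on_subset by blast
  from v show ?thesis
  proof
    assume "h a < v \<and> v < h b"
    then obtain c where "a \<le> c" "c \<le> b" "h c = v" using IVT'[OF _ _ _ c, of v] ab by auto
    then show ?thesis using \<open>h a < v \<and> v < h b\<close> by (intro exI[of _ c]) (auto simp: order.order_iff_strict)
  next
    assume "h b < v \<and> v < h a"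
    then obtain c where "a \<le> c" "c \<le> b" "h c = v" using IVT2'[OF _ _ _ c, of v] ab by auto
    then show ?thesis using \<open>h b < v \<and> v < h a\<close> by (intro exI[of _ c]) (auto simp: order.order_iff_strict)
  qed
qed

definition hump :: "(real \<Rightarrow> real) \<Rightarrow> bool" where
  "hump h \<longleftrightarrow> (\<exists>a m b. a < m \<and> m < b \<and> h a < h m \<and> h b < h m)"

definition good1 :: "(real \<Rightarrow> real) \<Rightarrow> bool" where
  "good1 h \<longleftrightarrow> continuous_on UNIV h \<and> (\<forall>x y z. x < y \<longrightarrow> y < z \<longrightarrow> h x = h y \<longrightarrow> h y = h z \<longrightarrow> False)
     \<and> (\<forall>c d. bounded (h -` {c..d}))"

definition peak :: "(real \<Rightarrow> real) \<Rightarrow> real \<Rightarrow> bool" where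
  "peak h m \<longleftrightarrow> (\<forall>w. h w \<le> h m) \<and> (\<forall>x y. x < y \<longrightarrow> y \<le> m \<longrightarrow> h x < h y)
     \<and> (\<forall>x y. m \<le> x \<longrightarrow> x < y \<longrightarrow> h y < h x) \<and> (\<forall>x c. \<exists>p. x \<le> p \<and> h p < c)
     \<and> (\<forall>x c. \<exists>p. p \<le> x \<and> h p < c)"

lemma hump_peak:
  assumes g: "good1 h" and hu: "hump h"
  shows "\<exists>m. peak h m"
proof -
  have hc: "continuous_on UNIV h" and h3: "\<And>x y z. x < y \<Longrightarrow> y < z \<Longrightarrow> h x = h y \<Longrightarrow> h y = h z \<Longrightarrow> False"
    and hb: "\<And>c d. bounded (h -` {c..d})" using g unfolding good1_def by blast+
  have ivt: "\<And>a b v. a < b \<Longrightarrow> (h a < v \<and> v < h b) \<or> (h b < v \<and> v < h a) \<Longrightarrow> \<exists>c. a < c \<and> c < b \<and> h c = v"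
    using ivt_between[OF hc] by blast
  obtain a m0 b where am0: "a < m0" "m0 < b" "h a < h m0" "h b < h m0" using hu by (auto simp: hump_def)
  obtain m where m: "m \<in> {a..b}" "\<And>y. y \<in> {a..b} \<Longrightarrow> h y \<le> h m"
    using continuous_attains_sup[of "{a..b}" h] hc am0 continuous_on_subset by force
  have "h m0 \<le> h m" using m am0 by auto
  then have am: "a < m" and mb: "m < b" using m am0 by (auto simp: order.order_iff_strict) (metis less_le_not_le)+
  have gmax: "h w \<le> h m" for w
  proof (rule ccontr)
    assume "\<not> h w \<le> h m"
    then have hw: "h m < h w" by simp
    define v where "v = (max (h a) (h b) + h m) / 2"
    have v: "h a < v" "h b < v" "v < h m" using am0 \<open>h m0 \<le> h m\<close> by (auto simp: v_def)
    obtain c1 where c1: "a < c1" "c1 < m" "h c1 = v" using ivt[OF am] v by auto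
    obtain c2 where c2: "m < c2" "c2 < b" "h c2 = v" using ivt[OF mb] v by auto
    have "w < a \<or> b < w" using hw m by (metis atLeastAtMost_iff linorder_not_le)
    then show False
    proof
      assume "w < a"
      obtain c0 where "w < c0" "c0 < a" "h c0 = v" using ivt[OF \<open>w < a\<close>, of v] v hw by auto
      then show False using h3[of c0 c1 c2] c1 c2 by auto
    next
      assume "b < w"
      obtain c3 where "b < c3" "c3 < w" "h c3 = v" using ivt[OF \<open>b < w\<close>, of v] v hw by auto
      then show False using h3[of c1 c2 c3] c1 c2 by auto
    qed
  qed
  have downR: "\<exists>p. x \<le> p \<and> h p < c" for x c
  proof -
    obtain B where B: "\<And>y. y \<in> h -` {c..h m} \<Longrightarrow> norm y \<le> B" using hb[of c "h m"] unfolding bounded_iff by blast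
    define p where "p = max x (B + 1)"
    have "\<not> norm p \<le> B" by (auto simp: p_def)
    then have "h p < c" using B[of p] gmax[of p] by force
    then show ?thesis by (intro exI[of _ p]) (auto simp: p_def)
  qed
  have downL: "\<exists>p. p \<le> x \<and> h p < c" for x c
  proof -
    obtain B where B: "\<And>y. y \<in> h -` {c..h m} \<Longrightarrow> norm y \<le> B" using hb[of c "h m"] unfolding bounded_iff by blast
    define p where "p = min x (- B - 1)"
    have "\<not> norm p \<le> B" by (auto simp: p_def)
    then have "h p < c" using B[of p] gmax[of p] by force
    then show ?thesis by (intro exI[of _ p]) (auto simp: p_def)
  qed
  have twomax: False if xy: "x < y" "h x = h m" "h y = h m" for x y
  proof -
    obtain p where p: "p \<le> x - 1" "h p < h m" using downL by blast
    show False
    proof (cases "\<exists>u. x < u \<and> u < y \<and> h u < h m")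
      case True
      then obtain u where u: "x < u" "u < y" "h u < h m" by blast
      define v where "v = (max (h p) (h u) + h m) / 2"
      have v: "h p < v" "h u < v" "v < h m" using p u by (auto simp: v_def)
      obtain c1 where c1: "p < c1" "c1 < x" "h c1 = v" using ivt[of p x v] p v xy by auto
      obtain c2 where c2: "x < c2" "c2 < u" "h c2 = v" using ivt[of x u v] u v xy by auto
      obtain c3 where c3: "u < c3" "c3 < y" "h c3 = v" using ivt[of u y v] u v xy by auto
      show False using h3[of c1 c2 c3] c1 c2 c3 by auto
    next
      case False
      have mid: "x < (x+y)/2" "(x+y)/2 < y" using xy by auto
      have nn: "\<And>u. x < u \<Longrightarrow> u < y \<Longrightarrow> \<not> h u < h m" using False by blast
      have "\<not> h ((x+y)/2) < h m" by (rule nn[OF mid])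
      then have hmid: "h ((x+y)/2) = h m" using gmax[of "(x+y)/2"] by linarith
      have "h x = h ((x+y)/2)" "h ((x+y)/2) = h y" using hmid xy(2,3) by simp_all
      then show False by (rule h3[OF mid])
    qed
  qed
  have inc: "h x < h y" if xy: "x < y" "y \<le> m" for x y
  proof (rule ccontr)
    assume "\<not> h x < h y"
    then have le: "h y \<le> h x" by simp
    have nx: "h x \<noteq> h m" using twomax[of x m] xy by force
    have ny: "h y \<noteq> h m"
    proof
      assume "h y = h m"
      then show False using nx le gmax[of x] by auto
    qed
    have ym: "y < m" using ny xy by (auto simp: order.order_iff_strict)
    have hxm: "h x < h m" "h y < h m" using nx ny gmax[of x] gmax[of y] by auto
    show False
    proof (cases "h y < h x")
      case True
      obtain p where p: "p \<le> x - 1" "h p < h y" using downL by blast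
      define v where "v = (h y + h x) / 2"
      have v: "h y < v" "v < h x" "v < h m" using True hxm by (auto simp: v_def)
      obtain c1 where c1: "p < c1" "c1 < x" "h c1 = v" using ivt[of p x v] p v by auto
      obtain c2 where c2: "x < c2" "c2 < y" "h c2 = v" using ivt[of x y v] xy v by auto
      obtain c3 where c3: "y < c3" "c3 < m" "h c3 = v" using ivt[of y m v] ym v by auto
      show False using h3[of c1 c2 c3] c1 c2 c3 by auto
    next
      case False
      then have eq: "h y = h x" using le by simp
      obtain q where q: "m + 1 \<le> q" "h q < h x" using downR by blast
      obtain c3 where c3: "m < c3" "c3 < q" "h c3 = h x" using ivt[of m q "h x"] q hxm by auto
      show False using h3[of x y c3] c3 xy ym eq by auto
    qed
  qed
  have dec: "h y < h x" if xy: "m \<le> x" "x < y" for x y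
  proof (rule ccontr)
    assume "\<not> h y < h x"
    then have le: "h x \<le> h y" by simp
    have ny: "h y \<noteq> h m" using twomax[of m y] xy by force
    have nx: "h x \<noteq> h m"
    proof
      assume "h x = h m"
      then show False using ny le gmax[of y] by auto
    qed
    have mx: "m < x" using nx xy by (auto simp: order.order_iff_strict)
    have hxm: "h x < h m" "h y < h m" using nx ny gmax[of x] gmax[of y] by auto
    show False
    proof (cases "h x < h y")
      case True
      obtain q where q: "y + 1 \<le> q" "h q < h x" using downR by blast
      define v where "v = (h y + h x) / 2"
      have v: "h x < v" "v < h y" "v < h m" using True hxm by (auto simp: v_def)
      obtain c1 where c1: "m < c1" "c1 < x" "h c1 = v" using ivt[of m x v] mx v by auto
      obtain c2 where c2: "x < c2" "c2 < y" "h c2 = v" using ivt[of x y v] xy v by auto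
      obtain c3 where c3: "y < c3" "c3 < q" "h c3 = v" using ivt[of y q v] q v by auto
      show False using h3[of c1 c2 c3] c1 c2 c3 by auto
    next
      case False
      then have eq: "h y = h x" using le by simp
      obtain p where p: "p \<le> m - 1" "h p < h x" using downL by blast
      obtain c1 where c1: "p < c1" "c1 < m" "h c1 = h x" using ivt[of p m "h x"] p hxm by auto
      have "c1 < x" using c1 mx by linarith
      show False by (rule h3[OF \<open>c1 < x\<close> xy(2)]) (use c1 eq in simp_all)
    qed
  qed
  have "peak h m" unfolding peak_def
    apply (intro conjI allI impI)
    using gmax inc dec downR downL by auto
  then show ?thesis by blast
qed

lemma good1_neg: "good1 h \<Longrightarrow> good1 (\<lambda>t. - h t)"
proof -
  assume g: "good1 h"
  have "(\<lambda>t. - h t) -` {c..d} = h -` {-d..-c}" for c d by auto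
  then show ?thesis using g unfolding good1_def by (auto intro: continuous_intros)
qed

lemma hump_or_dip:
  assumes g: "good1 h" and ab: "a < b" "h a = h b"
  shows "hump h \<or> hump (\<lambda>t. - h t)"
proof -
  have h3: "\<And>x y z. x < y \<Longrightarrow> y < z \<Longrightarrow> h x = h y \<Longrightarrow> h y = h z \<Longrightarrow> False" using g unfolding good1_def by blast
  have "h ((a+b)/2) \<noteq> h a" using h3[of a "(a+b)/2" b] ab by auto
  then show ?thesis
  proof (cases "h a < h ((a+b)/2)")
    case True
    then show ?thesis using ab by (unfold hump_def, intro disjI1 exI[of _ a] exI[of _ "(a+b)/2"] exI[of _ b]) auto
  next
    case False
    then show ?thesis using ab \<open>h ((a+b)/2) \<noteq> h a\<close>
      by (unfold hump_def, intro disjI2 exI[of _ a] exI[of _ "(a+b)/2"] exI[of _ b]) auto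
  qed
qed

lemma not_hump_and_dip:
  assumes g: "good1 h" and "hump h" "hump (\<lambda>t. - h t)"
  shows False
proof -
  obtain m where m: "peak h m" using hump_peak assms by blast
  obtain m' where m': "peak (\<lambda>t. - h t) m'" using hump_peak[OF good1_neg[OF g]] assms by blast
  obtain p where "- h p < - h m - 1" using m' unfolding peak_def by blast
  then show False using m unfolding peak_def by (smt (verit))
qed

lemma cont_from_rays:
  fixes f :: "'a::topological_space \<Rightarrow> real"
  assumes "\<And>c. open {x. c < f x}" "\<And>c. open {x. f x < c}"
  shows "continuous_on UNIV f"
  unfolding continuous_on_open_vimage[OF open_UNIV]
proof (intro allI impI)
  fix B :: "real set" assume "open B"
  show "open (f -` B \<inter> UNIV)"
    unfolding open_subopen[of "f -` B \<inter> UNIV"]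
  proof
    fix x assume "x \<in> f -` B \<inter> UNIV"
    then have "f x \<in> B" by simp
    then obtain \<epsilon> where e: "\<epsilon> > 0" "ball (f x) \<epsilon> \<subseteq> B" using \<open>open B\<close> open_contains_ball by blast
    define T where "T = {y. f x - \<epsilon> < f y} \<inter> {y. f y < f x + \<epsilon>}"
    have "open T" unfolding T_def using assms by (intro open_Int) auto
    moreover have "x \<in> T" using e by (auto simp: T_def)
    moreover have "T \<subseteq> f -` B \<inter> UNIV"
    proof
      fix y assume "y \<in> T"
      then have "f y \<in> ball (f x) \<epsilon>" by (auto simp: T_def dist_real_def abs_if)
      then show "y \<in> f -` B \<inter> UNIV" using e by auto
    qed
    ultimately show "\<exists>T. open T \<and> x \<in> T \<and> T \<subseteq> f -` B \<inter> UNIV" by blast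
  qed
qed

lemma sec_cont_gen:
  fixes g :: "'a::topological_space \<times> real \<Rightarrow> real"
  assumes "continuous_on UNIV g"
  shows "continuous_on UNIV (\<lambda>t. g (e,t))" "continuous_on UNIV (\<lambda>e. g (e,t))"
proof -
  have c1: "continuous_on UNIV (\<lambda>t::real. (e,t))" by (intro continuous_on_Pair continuous_on_const continuous_on_id)
  have c2: "continuous_on UNIV (\<lambda>e::'a. (e,t))" by (intro continuous_on_Pair continuous_on_const continuous_on_id)
  show "continuous_on UNIV (\<lambda>t. g (e,t))" using continuous_on_compose2[OF assms c1] by simp
  show "continuous_on UNIV (\<lambda>e. g (e,t))" using continuous_on_compose2[OF assms c2] by simp
qed

lemma hump_open_gen:
  fixes g :: "'a::topological_space \<times> real \<Rightarrow> real"
  assumes gc: "continuous_on UNIV g"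
  shows "open {e. hump (\<lambda>t. g (e,t))}"
  unfolding open_subopen[of "{e. hump (\<lambda>t. g (e,t))}"]
proof
  fix e assume "e \<in> {e. hump (\<lambda>t. g (e,t))}"
  then obtain a m b where amb: "a < m" "m < b" "g (e,a) < g (e,m)" "g (e,b) < g (e,m)" by (auto simp: hump_def)
  define T where "T = {e. g (e,a) < g (e,m)} \<inter> {e. g (e,b) < g (e,m)}"
  have "open T" unfolding T_def by (intro open_Int open_Collect_less sec_cont_gen[OF gc])
  moreover have "e \<in> T" using amb by (auto simp: T_def)
  moreover have "T \<subseteq> {e. hump (\<lambda>t. g (e,t))}" using amb unfolding T_def hump_def by blast
  ultimately show "\<exists>T. open T \<and> e \<in> T \<and> T \<subseteq> {e. hump (\<lambda>t. g (e,t))}" by blast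
qed

context
  fixes g :: "'a::real_normed_vector \<times> real \<Rightarrow> real"
  assumes gc: "continuous_on UNIV g"
    and gp: "\<And>K. compact K \<Longrightarrow> compact (fibre_map g -` K)"
    and g3: "\<And>e x y z. x < y \<Longrightarrow> y < z \<Longrightarrow> g (e,x) = g (e,y) \<Longrightarrow> g (e,y) = g (e,z) \<Longrightarrow> False"
begin

lemma Gc: "continuous_on UNIV (fibre_map g)"
  unfolding fm_eq by (intro continuous_intros gc)

lemma Gclosed: "closed C \<Longrightarrow> closed (fibre_map g ` C)"
  using proper_closed[OF Gc gp] by blast

lemma good_sec: "good1 (\<lambda>t. g (e,t))"
proof -
  have b: "bounded ((\<lambda>t. g (e,t)) -` {c..d})" for c d
  proof -
    define P where "P = fibre_map g -` ({e} \<times> {c..d})"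
    have "compact P" unfolding P_def by (intro gp compact_Times compact_Icc) simp
    then have "compact (snd ` P)" by (intro compact_continuous_image continuous_intros)
    moreover have "(\<lambda>t. g (e,t)) -` {c..d} = snd ` P"
    proof
      show "(\<lambda>t. g (e,t)) -` {c..d} \<subseteq> snd ` P"
      proof
        fix t assume "t \<in> (\<lambda>t. g (e,t)) -` {c..d}"
        then have "(e,t) \<in> P" by (auto simp: P_def)
        then show "t \<in> snd ` P" by (intro image_eqI[of _ snd "(e,t)"]) auto
      qed
      show "snd ` P \<subseteq> (\<lambda>t. g (e,t)) -` {c..d}"
      proof
        fix t assume "t \<in> snd ` P"
        then obtain x where x: "x \<in> P" "t = snd x" by auto
        obtain e' s where xe: "x = (e',s)" by (cases x)
        show "t \<in> (\<lambda>t. g (e,t)) -` {c..d}" using x xe by (auto simp: P_def)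
      qed
    qed
    ultimately show ?thesis by (simp add: compact_imp_bounded)
  qed
  show ?thesis unfolding good1_def using b sec_cont_gen(1)[OF gc] g3 by blast
qed

lemma compl_open: "open {e. \<not> hump (\<lambda>t. g (e,t))}"
  unfolding open_subopen[of "{e. \<not> hump (\<lambda>t. g (e,t))}"]
proof
  fix e assume "e \<in> {e. \<not> hump (\<lambda>t. g (e,t))}"
  then have nh: "\<not> hump (\<lambda>t. g (e,t))" by simp
  show "\<exists>T. open T \<and> e \<in> T \<and> T \<subseteq> {e. \<not> hump (\<lambda>t. g (e,t))}"
  proof (cases "\<exists>a b. a < b \<and> g (e,a) = g (e,b)")
    case True
    then obtain a b where ab: "a < b" "g (e,a) = g (e,b)" by blast
    have dip: "hump (\<lambda>t. - g (e,t))" using hump_or_dip[OF good_sec ab] nh by blast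
    define T where "T = {e. hump (\<lambda>t. - g (e,t))}"
    have "open T" unfolding T_def using hump_open_gen[of "\<lambda>x. - g x"] gc by (auto intro: continuous_intros)
    moreover have "T \<subseteq> {e. \<not> hump (\<lambda>t. g (e,t))}"
      unfolding T_def using not_hump_and_dip[OF good_sec] by blast
    ultimately show ?thesis using dip unfolding T_def by blast
  next
    case False
    then have inj: "\<And>a b. a < b \<Longrightarrow> g (e,a) \<noteq> g (e,b)" by blast
    have "g (e,0) \<noteq> g (e,1)" using inj[of 0 1] by simp
    then consider "g (e,0) < g (e,1)" | "g (e,1) < g (e,0)" by linarith
    then show ?thesis
    proof cases
      case 1
      define C where "C = {x::'a \<times> real. 1 \<le> snd x}"
      have "closed C" unfolding C_def by (intro closed_Collect_le continuous_intros)
      define D where "D = fibre_map g ` C"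
      have cD: "closed D" unfolding D_def by (rule Gclosed[OF \<open>closed C\<close>])
      define T where "T = {e'. (e', g (e',0)) \<in> - D} \<inter> {e'. g (e',0) < g (e',1)}"
      have c0: "continuous_on UNIV (\<lambda>e'. (e', g (e',0)))" using sec_cont_gen(2)[OF gc] by (intro continuous_intros)
      have "open {e'. (e', g (e',0)) \<in> - D}"
        using c0[unfolded continuous_on_open_vimage[OF open_UNIV]] cD by (auto simp: vimage_def)
      then have "open T" unfolding T_def by (intro open_Int open_Collect_less sec_cont_gen[OF gc])
      moreover have "e \<in> T"
      proof -
        have "(e, g (e,0)) \<notin> D"
        proof
          assume "(e, g (e,0)) \<in> D"
          then obtain x where x: "x \<in> C" "fibre_map g x = (e, g (e,0))" by (auto simp: D_def)
          obtain e' s where xe: "x = (e',s)" by (cases x)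
          have "e' = e" "g (e,s) = g (e,0)" "1 \<le> s" using x xe by (auto simp: C_def)
          then show False using inj[of 0 s] by simp
        qed
        then show ?thesis using 1 by (auto simp: T_def)
      qed
      moreover have "T \<subseteq> {e. \<not> hump (\<lambda>t. g (e,t))}"
      proof
        fix e' assume "e' \<in> T"
        then have nd: "(e', g (e',0)) \<notin> D" and lt: "g (e',0) < g (e',1)" by (auto simp: T_def)
        show "e' \<in> {e. \<not> hump (\<lambda>t. g (e,t))}"
        proof
          show "\<not> hump (\<lambda>t. g (e',t))"
          proof
            assume "hump (\<lambda>t. g (e',t))"
            then obtain mm where "peak (\<lambda>t. g (e',t)) mm" using hump_peak[OF good_sec] by blast
            then obtain p where p: "1 \<le> p" "g (e',p) < g (e',0)" unfolding peak_def by blast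
            have "1 < p" using p lt by (cases "p = 1") auto
            then obtain c where c: "1 < c" "c < p" "g (e',c) = g (e',0)"
              using ivt_between[OF sec_cont_gen(1)[OF gc, where e=e'], of 1 p "g (e',0)"] p lt by auto
            have "(e',c) \<in> C" using c by (auto simp: C_def)
            then have "fibre_map g (e',c) \<in> D" unfolding D_def by (rule imageI)
            then show False using nd c by simp
          qed
        qed
      qed
      ultimately show ?thesis by blast
    next
      case 2
      define C where "C = {x::'a \<times> real. snd x \<le> 0}"
      have "closed C" unfolding C_def by (intro closed_Collect_le continuous_intros)
      define D where "D = fibre_map g ` C"
      have cD: "closed D" unfolding D_def by (rule Gclosed[OF \<open>closed C\<close>])
      define T where "T = {e'. (e', g (e',1)) \<in> - D} \<inter> {e'. g (e',1) < g (e',0)}"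
      have c0: "continuous_on UNIV (\<lambda>e'. (e', g (e',1)))" using sec_cont_gen(2)[OF gc] by (intro continuous_intros)
      have "open {e'. (e', g (e',1)) \<in> - D}"
        using c0[unfolded continuous_on_open_vimage[OF open_UNIV]] cD by (auto simp: vimage_def)
      then have "open T" unfolding T_def by (intro open_Int open_Collect_less sec_cont_gen[OF gc])
      moreover have "e \<in> T"
      proof -
        have "(e, g (e,1)) \<notin> D"
        proof
          assume "(e, g (e,1)) \<in> D"
          then obtain x where x: "x \<in> C" "fibre_map g x = (e, g (e,1))" by (auto simp: D_def)
          obtain e' s where xe: "x = (e',s)" by (cases x)
          have "e' = e" "g (e,s) = g (e,1)" "s \<le> 0" using x xe by (auto simp: C_def)
          then show False using inj[of s 1] by simp
        qed
        then show ?thesis using 2 by (auto simp: T_def)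
      qed
      moreover have "T \<subseteq> {e. \<not> hump (\<lambda>t. g (e,t))}"
      proof
        fix e' assume "e' \<in> T"
        then have nd: "(e', g (e',1)) \<notin> D" and lt: "g (e',1) < g (e',0)" by (auto simp: T_def)
        show "e' \<in> {e. \<not> hump (\<lambda>t. g (e,t))}"
        proof
          show "\<not> hump (\<lambda>t. g (e',t))"
          proof
            assume "hump (\<lambda>t. g (e',t))"
            then obtain mm where "peak (\<lambda>t. g (e',t)) mm" using hump_peak[OF good_sec] by blast
            then obtain p where p: "p \<le> 0" "g (e',p) < g (e',1)" unfolding peak_def by blast
            have "p < 0" using p lt by (cases "p = 0") auto
            then obtain c where c: "p < c" "c < 0" "g (e',c) = g (e',1)"
              using ivt_between[OF sec_cont_gen(1)[OF gc, where e=e'], of p 0 "g (e',1)"] p lt by auto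
            have "(e',c) \<in> C" using c by (auto simp: C_def)
            then have "fibre_map g (e',c) \<in> D" unfolding D_def by (rule imageI)
            then show False using nd c by simp
          qed
        qed
      qed
      ultimately show ?thesis by blast
    qed
  qed
qed

lemma all_hump:
  assumes "hump (\<lambda>t. g (e0,t))"
  shows "hump (\<lambda>t. g (e,t))"
proof -
  define A where "A = {e. hump (\<lambda>t. g (e,t))}"
  have "open A" unfolding A_def by (rule hump_open_gen[OF gc])
  moreover have "closed A"
  proof -
    have "- A = {e. \<not> hump (\<lambda>t. g (e,t))}" by (auto simp: A_def)
    then show ?thesis using compl_open by (simp add: closed_def)
  qed
  moreover have "A \<noteq> {}" using assms by (auto simp: A_def)
  ultimately have "A = UNIV" using clopen[of A] by blast
  then show ?thesis by (auto simp: A_def)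
qed

lemma fold_case:
  assumes allh: "\<And>e. hump (\<lambda>t. g (e,t))"
  shows "global_fold (fibre_map g)"
proof -
  note gs = good_sec
  note sc = sec_cont_gen[OF gc]
  note Gcl = Gclosed
  have ex: "\<And>e. \<exists>m. peak (\<lambda>t. g (e,t)) m" using hump_peak[OF gs allh] by blast
  define m where "m = (\<lambda>e. SOME m. peak (\<lambda>t. g (e,t)) m)"
  have pk: "\<And>e. peak (\<lambda>t. g (e,t)) (m e)" unfolding m_def using someI_ex[OF ex] by blast
  define M where "M = (\<lambda>e. g (e, m e))"
  have Mmax: "\<And>e w. g (e,w) \<le> M e" using pk unfolding peak_def M_def by blast
  have incr: "\<And>e x y. x < y \<Longrightarrow> y \<le> m e \<Longrightarrow> g (e,x) < g (e,y)" using pk unfolding peak_def by blast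
  have decr: "\<And>e x y. m e \<le> x \<Longrightarrow> x < y \<Longrightarrow> g (e,y) < g (e,x)" using pk unfolding peak_def by blast
  have dR: "\<And>e x c. \<exists>p. x \<le> p \<and> g (e,p) < c" using pk unfolding peak_def by blast
  have dL: "\<And>e x c. \<exists>p. p \<le> x \<and> g (e,p) < c" using pk unfolding peak_def by blast
  have Mlt: "g (e,w) < M e" if "w \<noteq> m e" for e w
  proof (cases "w < m e")
    case True then show ?thesis using incr[of w "m e" e] by (simp add: M_def)
  next
    case False then have "m e < w" using that by simp
    then show ?thesis using decr[of e "m e" w] by (simp add: M_def)
  qed
  have img: "\<exists>t. g (e,t) = c" if "c \<le> M e" for e c
  proof (cases "c = M e")
    case True then show ?thesis by (auto simp: M_def)
  next
    case False
    then have cl: "c < M e" using that by simp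
    obtain p where p: "p \<le> m e" "g (e,p) < c" using dL by blast
    have "p < m e" using p cl by (cases "p = m e") (auto simp: M_def)
    then obtain s where "p < s" "s < m e" "g (e,s) = c"
      using ivt_between[OF sc(1)[where e=e], of p "m e" c] p cl by (auto simp: M_def)
    then show ?thesis by blast
  qed
  have Mcont: "continuous_on UNIV M"
  proof (rule cont_from_rays)
    fix c
    show "open {e. c < M e}"
      unfolding open_subopen[of "{e. c < M e}"]
    proof
      fix e assume "e \<in> {e. c < M e}"
      define T where "T = {e'. c < g (e', m e)}"
      have "open T" unfolding T_def by (intro open_Collect_less continuous_on_const sc(2))
      moreover have "e \<in> T" using \<open>e \<in> {e. c < M e}\<close> by (auto simp: T_def M_def)
      moreover have "T \<subseteq> {e. c < M e}"
      proof
        fix e' assume "e' \<in> T"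
        then have "c < g (e', m e)" by (simp add: T_def)
        then show "e' \<in> {e. c < M e}" using Mmax[of e' "m e"] by simp
      qed
      ultimately show "\<exists>T. open T \<and> e \<in> T \<and> T \<subseteq> {e. c < M e}" by blast
    qed
    have eq: "{e. M e < c} = - ((\<lambda>e. (e,c)) -` (fibre_map g ` UNIV) \<inter> UNIV)"
    proof (rule set_eqI)
      fix e
      have "(e,c) \<in> fibre_map g ` UNIV \<longleftrightarrow> (\<exists>t. g (e,t) = c)"
      proof
        assume "(e,c) \<in> fibre_map g ` UNIV"
        then obtain x where "fibre_map g x = (e,c)" by auto
        then show "\<exists>t. g (e,t) = c" by (cases x) auto
      next
        assume "\<exists>t. g (e,t) = c"
        then obtain t where "g (e,t) = c" by blast
        then have "fibre_map g (e,t) = (e,c)" by simp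
        then show "(e,c) \<in> fibre_map g ` UNIV" by (metis rangeI)
      qed
      moreover have "M e < c \<longleftrightarrow> \<not> (\<exists>t. g (e,t) = c)"
        using Mmax img by (meson not_le)
      ultimately show "e \<in> {e. M e < c} \<longleftrightarrow> e \<in> - ((\<lambda>e. (e,c)) -` (fibre_map g ` UNIV) \<inter> UNIV)" by auto
    qed
    have "continuous_on UNIV (\<lambda>e::'a. (e,c))" by (intro continuous_on_Pair continuous_on_const continuous_on_id)
    then have "closed ((\<lambda>e. (e,c)) -` (fibre_map g ` UNIV) \<inter> UNIV)"
      using Gcl[OF closed_UNIV] unfolding continuous_on_closed_vimage[OF closed_UNIV] by blast
    then show "open {e. M e < c}" unfolding eq by blast
  qed
  have Mf: "continuous_on UNIV (\<lambda>x. M (fst x))"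
    by (rule continuous_on_compose2[OF Mcont]) (auto intro: continuous_intros)
  have cMg: "continuous_on UNIV (\<lambda>e. (e, M e))" by (intro continuous_on_Pair continuous_on_id Mcont)
  have mcont: "continuous_on UNIV m"
    unfolding continuous_on_closed_vimage[OF closed_UNIV]
  proof (intro allI impI)
    fix B :: "real set" assume "closed B"
    define S where "S = (snd -` B \<inter> UNIV) \<inter> {x. g x = M (fst x)}"
    have cs: "continuous_on UNIV (snd :: 'a \<times> real \<Rightarrow> real)" by (intro continuous_intros)
    have "closed ((snd :: 'a \<times> real \<Rightarrow> real) -` B \<inter> UNIV)"
      using \<open>closed B\<close> cs
      unfolding continuous_on_closed_vimage[OF closed_UNIV] by simp
    moreover have "closed {x. g x = M (fst x)}" by (intro closed_Collect_eq gc Mf)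
    ultimately have "closed S" unfolding S_def by blast
    define D where "D = fibre_map g ` S"
    have "closed D" unfolding D_def by (rule Gcl[OF \<open>closed S\<close>])
    have "m -` B \<inter> UNIV = (\<lambda>e. (e, M e)) -` D \<inter> UNIV"
    proof (rule set_eqI, rule iffI)
      fix e assume "e \<in> m -` B \<inter> UNIV"
      then have "(e, m e) \<in> S" by (auto simp: S_def M_def)
      then have "fibre_map g (e, m e) \<in> D" unfolding D_def by (rule imageI)
      then show "e \<in> (\<lambda>e. (e, M e)) -` D \<inter> UNIV" by (simp add: M_def)
    next
      fix e assume "e \<in> (\<lambda>e. (e, M e)) -` D \<inter> UNIV"
      then obtain x where x: "x \<in> S" "fibre_map g x = (e, M e)" by (auto simp: D_def)
      obtain e' t where xe: "x = (e',t)" by (cases x)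
      have "e' = e" "g (e,t) = M e" "t \<in> B" using x xe by (auto simp: S_def)
      then have "t = m e" using Mlt[of t e] by (cases "t = m e") auto
      then show "e \<in> m -` B \<inter> UNIV" using \<open>t \<in> B\<close> by simp
    qed
    moreover have "closed ((\<lambda>e. (e, M e)) -` D \<inter> UNIV)"
      using cMg \<open>closed D\<close> unfolding continuous_on_closed_vimage[OF closed_UNIV] by blast
    ultimately show "closed (m -` B \<inter> UNIV)" by simp
  qed
  have mf: "continuous_on UNIV (\<lambda>x. m (fst x))"
    by (rule continuous_on_compose2[OF mcont]) (auto intro: continuous_intros)
  define psi where "psi = (\<lambda>x. if snd x \<le> m (fst x) then g x - M (fst x) else M (fst x) - g x)"
  have gm: "g x = M (fst x)" if "snd x = m (fst x)" for x
    using that by (cases x) (auto simp: M_def)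
  have psi_cont: "continuous_on UNIV psi"
  proof -
    have "continuous_on ({x. snd x \<le> m (fst x)} \<union> {x. m (fst x) \<le> snd x}) psi"
      unfolding psi_def
      apply (rule continuous_on_cases)
      apply (rule closed_Collect_le, intro continuous_intros, rule mf)
      apply (rule closed_Collect_le, rule mf, intro continuous_intros)
      apply (rule continuous_on_subset[of UNIV], intro continuous_intros gc Mf, simp)
      apply (rule continuous_on_subset[of UNIV], intro continuous_intros gc Mf, simp)
      using gm by fastforce
    moreover have "{x. snd x \<le> m (fst x)} \<union> {x. m (fst x) \<le> snd x} = UNIV" by auto
    ultimately show ?thesis by simp
  qed
  define Psi where "Psi = fibre_map psi"
  have Psi_cont: "continuous_on UNIV Psi" unfolding Psi_def fm_eq by (intro continuous_intros psi_cont)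
  have Gfac: "g x = M (fst x) - \<bar>psi x\<bar>" for x
    using Mmax[of "fst x" "snd x"] by (cases x) (auto simp: psi_def)
  have psi_mono: "psi (e,s1) < psi (e,s2)" if "s1 < s2" for e s1 s2
  proof (cases "s2 \<le> m e")
    case True then show ?thesis using incr[OF that True] that by (simp add: psi_def)
  next
    case False
    show ?thesis
    proof (cases "s1 \<le> m e")
      case True
      have "g (e,s2) < M e" using Mlt[of s2 e] False by auto
      then show ?thesis using True False Mmax[of e s1] by (simp add: psi_def)
    next
      case F2: False
      then show ?thesis using decr[of e s1 s2] that False by (simp add: psi_def)
    qed
  qed
  have Psi_inj: "inj Psi"
  proof (rule injI)
    fix x y assume "Psi x = Psi y"
    then have fe: "fst x = fst y" and pe: "psi x = psi y" by (auto simp: Psi_def fm_eq)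
    obtain e s1 where xe: "x = (e,s1)" by (cases x)
    obtain s2 where ye: "y = (e,s2)" using fe xe by (cases y) auto
    have "s1 = s2"
    proof (rule ccontr)
      assume "s1 \<noteq> s2"
      then have "s1 < s2 \<or> s2 < s1" by linarith
      then show False using psi_mono[of s1 s2 e] psi_mono[of s2 s1 e] pe xe ye by auto
    qed
    then show "x = y" using xe ye by simp
  qed
  have psi_surj: "\<exists>s. psi (e,s) = t" for e t
  proof (cases "t \<le> 0")
    case True
    show ?thesis
    proof (cases "t = 0")
      case True then show ?thesis by (intro exI[of _ "m e"]) (simp add: psi_def M_def)
    next
      case False
      then have tn: "t < 0" using \<open>t \<le> 0\<close> by simp
      obtain p where p: "p \<le> m e" "g (e,p) < M e + t" using dL by blast
      have "p < m e" using p tn by (cases "p = m e") (auto simp: M_def)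
      then obtain s where s: "p < s" "s < m e" "g (e,s) = M e + t"
        using ivt_between[OF sc(1)[where e=e], of p "m e" "M e + t"] p tn by (auto simp: M_def)
      then show ?thesis by (intro exI[of _ s]) (simp add: psi_def)
    qed
  next
    case False
    then have tp: "0 < t" by simp
    obtain q where q: "m e \<le> q" "g (e,q) < M e - t" using dR by blast
    have "m e < q" using q tp by (cases "q = m e") (auto simp: M_def)
    then obtain s where s: "m e < s" "s < q" "g (e,s) = M e - t"
      using ivt_between[OF sc(1)[where e=e], of "m e" q "M e - t"] q tp by (auto simp: M_def)
    then show ?thesis by (intro exI[of _ s]) (simp add: psi_def)
  qed
  have Psi_surj: "surj Psi"
  proof -
    have "y \<in> range Psi" for y
    proof -
      obtain e t where ye: "y = (e,t)" by (cases y)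
      obtain s where "psi (e,s) = t" using psi_surj by blast
      then have "Psi (e,s) = y" using ye by (simp add: Psi_def)
      then show ?thesis by (metis rangeI)
    qed
    then show ?thesis by blast
  qed
  define Phi where "Phi = (\<lambda>y::'a \<times> real. (fst y, M (fst y) - \<bar>snd y\<bar>))"
  have Phi_cont: "continuous_on UNIV Phi" unfolding Phi_def by (intro continuous_intros Mf)
  have GPhi: "fibre_map g x = Phi (Psi x)" for x
    using Gfac[of x] by (simp add: Phi_def Psi_def fm_eq)
  have Psi_prop: "compact (Psi -` K)" if "compact K" for K
  proof -
    have "compact (Phi ` K)" using compact_continuous_image[OF continuous_on_subset[OF Phi_cont] that] by simp
    then have c1: "compact (fibre_map g -` (Phi ` K))" by (rule gp)
    have "closed K" using that by (rule compact_imp_closed)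
    then have c2: "closed (Psi -` K)"
      using Psi_cont unfolding continuous_on_closed_vimage[OF closed_UNIV] by auto
    have "Psi -` K = fibre_map g -` (Phi ` K) \<inter> Psi -` K" using GPhi by auto
    then show ?thesis using compact_Int_closed[OF c1 c2] by simp
  qed
  have "is_homeo Psi"
    using homeo_of_proper_bij[of Psi] Psi_cont Psi_prop bijI[OF Psi_inj Psi_surj] by blast
  then obtain Psi' where hm: "homeomorphism UNIV UNIV Psi Psi'" unfolding is_homeo_def by blast
  have PP: "Psi (Psi' y) = y" for y using hm unfolding homeomorphism_def by blast
  define g1 where "g1 = (\<lambda>y. snd (Psi' y))"
  have fst_Psi': "fst (Psi' y) = fst y" for y
    using arg_cong[OF PP[of y], of fst] by (simp add: Psi_def)
  have g1eq: "fibre_map g1 = Psi'"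
    unfolding fm_eq g1_def using fst_Psi' by (auto intro!: ext prod_eqI)
  have h1: "is_homeo (fibre_map g1)"
    unfolding g1eq is_homeo_def using homeomorphism_sym hm by blast
  define g2 where "g2 = (\<lambda>y::'a \<times> real. snd y - M (fst y))"
  have h2: "is_homeo (fibre_map g2)"
    unfolding is_homeo_def
  proof (intro exI[of _ "fibre_map (\<lambda>y. snd y + M (fst y))"])
    show "homeomorphism UNIV UNIV (fibre_map g2) (fibre_map (\<lambda>y. snd y + M (fst y)))"
    proof -
      define F where "F = (\<lambda>x::'a \<times> real. (fst x, snd x - M (fst x)))"
      define Gi where "Gi = (\<lambda>x::'a \<times> real. (fst x, snd x + M (fst x)))"
      have i1: "\<And>x. Gi (F x) = x" and i2: "\<And>x. F (Gi x) = x" by (simp_all add: F_def Gi_def)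
      have s1: "surj F" using i2 by (metis surjI)
      have s2: "surj Gi" using i1 by (metis surjI)
      have c1: "continuous_on UNIV F" unfolding F_def by (intro continuous_intros Mf)
      have c2: "continuous_on UNIV Gi" unfolding Gi_def by (intro continuous_intros Mf)
      have "homeomorphism UNIV UNIV F Gi" unfolding homeomorphism_def using i1 i2 s1 s2 c1 c2 by auto
      moreover have "fibre_map g2 = F" "fibre_map (\<lambda>y. snd y + M (fst y)) = Gi"
        by (simp_all add: fm_eq F_def Gi_def g2_def)
      ultimately show ?thesis by simp
    qed
  qed
  have final: "(fibre_map g2 \<circ> fibre_map g \<circ> fibre_map g1) (e,t) = (e, - \<bar>t\<bar>)" for e t
  proof -
    define y where "y = Psi' (e,t)"
    have Py: "Psi y = (e,t)" using PP y_def by simp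
    then have fy: "fst y = e" and py: "psi y = t" by (auto simp: Psi_def fm_eq)
    have "fibre_map g1 (e,t) = y" using g1eq y_def by simp
    moreover have "fibre_map g y = (e, M e - \<bar>t\<bar>)" using Gfac[of y] fy py by (simp add: fm_eq)
    ultimately show ?thesis by (simp add: g2_def)
  qed
  show ?thesis unfolding global_fold_def using h1 h2 final by blast
qed


end

definition reflR :: "'a \<times> real \<Rightarrow> 'a \<times> real" where
  "reflR y = (fst y, - snd y)"

lemma reflR_invol[simp]: "reflR (reflR y) = y" by (simp add: reflR_def)

lemma reflR_homeo: "homeomorphism UNIV UNIV (reflR :: 'a::real_normed_vector \<times> real \<Rightarrow> _) reflR"
proof -
  have c: "continuous_on UNIV (reflR :: 'a \<times> real \<Rightarrow> _)" unfolding reflR_def by (intro continuous_intros)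
  have s: "surj (reflR :: 'a \<times> real \<Rightarrow> _)" by (metis reflR_invol surjI)
  show ?thesis unfolding homeomorphism_def using c s by simp
qed

lemma neg_fm: "fibre_map (\<lambda>x. - g x) = reflR \<circ> fibre_map g"
  by (auto simp: fm_eq reflR_def)

lemma fold_transfer:
  fixes g :: "'a::real_normed_vector \<times> real \<Rightarrow> real"
  assumes "global_fold (fibre_map (\<lambda>x. - g x))"
  shows "global_fold (fibre_map g)"
proof -
  obtain g1 g2 where h1: "is_homeo (fibre_map g1)" and h2: "is_homeo (fibre_map g2)"
    and eq: "\<And>e t. (fibre_map g2 \<circ> fibre_map (\<lambda>x. - g x) \<circ> fibre_map g1) (e,t) = (e, - \<bar>t\<bar>)"
    using assms unfolding global_fold_def by blast
  define g2' where "g2' = (\<lambda>y::'a \<times> real. g2 (fst y, - snd y))"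
  have fe: "fibre_map g2' = fibre_map g2 \<circ> reflR" by (auto simp: fm_eq reflR_def g2'_def)
  obtain k where k: "homeomorphism UNIV UNIV (fibre_map g2) k" using h2 unfolding is_homeo_def by blast
  have "homeomorphism UNIV UNIV (fibre_map g2 \<circ> reflR) (reflR \<circ> k)"
    by (rule homeomorphism_compose[OF reflR_homeo k])
  then have h2': "is_homeo (fibre_map g2')" unfolding fe is_homeo_def by blast
  have "(fibre_map g2' \<circ> fibre_map g \<circ> fibre_map g1) (e,t) = (e, - \<bar>t\<bar>)" for e t
    using eq[of e t] unfolding fe neg_fm by simp
  then show ?thesis unfolding global_fold_def using h1 h2' by blast
qed

lemma wrap:
  fixes g :: "'a::real_normed_vector \<times> real \<Rightarrow> real"
  assumes gc: "continuous_on UNIV g" and gp: "\<forall>K. compact K \<longrightarrow> compact (fibre_map g -` K)"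
    and g3: "\<forall>e x y z. x < y \<longrightarrow> y < z \<longrightarrow> g (e,x) = g (e,y) \<longrightarrow> g (e,y) = g (e,z) \<longrightarrow> False"
  shows "good1 (\<lambda>t. g (e,t))" and "hump (\<lambda>t. g (e0,t)) \<Longrightarrow> global_fold (fibre_map g)"
proof -
  have gp': "\<And>K. compact K \<Longrightarrow> compact (fibre_map g -` K)" using gp by blast
  have g3': "\<And>e x y z. x < y \<Longrightarrow> y < z \<Longrightarrow> g (e,x) = g (e,y) \<Longrightarrow> g (e,y) = g (e,z) \<Longrightarrow> False"
    using g3 by blast
  show "good1 (\<lambda>t. g (e,t))"
    apply (rule good_sec[where g=g])
    apply (rule gc)
    apply (erule gp')
    apply (erule (3) g3')
    done
  assume h: "hump (\<lambda>t. g (e0,t))"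
  have allh: "hump (\<lambda>t. g (e,t))" for e
    apply (rule all_hump[of g e0 e])
    apply (rule gc)
    apply (erule gp')
    apply (erule (3) g3')
    apply (rule h)
    done
  show "global_fold (fibre_map g)"
    apply (rule fold_case[where g=g])
    apply (rule gc)
    apply (erule gp')
    apply (erule (3) g3')
    apply (rule allh)
    done
qed

theorem proposition3p2:
  fixes g :: "'a::banach \<times> real \<Rightarrow> real"
  assumes "proper_cont_map (fibre_map g)"
    and "\<not> (\<exists>y x1 x2 x3. x1 \<noteq> x2 \<and> x1 \<noteq> x3 \<and> x2 \<noteq> x3 \<and>
            fibre_map g x1 = y \<and> fibre_map g x2 = y \<and> fibre_map g x3 = y)"
  shows "((\<exists>x1 x2. x1 \<noteq> x2 \<and> fibre_map g x1 = fibre_map g x2) \<longrightarrow> global_fold (fibre_map g))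
       \<and> (\<not> (\<exists>x1 x2. x1 \<noteq> x2 \<and> fibre_map g x1 = fibre_map g x2) \<longrightarrow> is_homeo (fibre_map g))"
proof -
  have Gc: "continuous_on UNIV (fibre_map g)" and gp: "\<And>K. compact K \<Longrightarrow> compact (fibre_map g -` K)"
    using assms(1) unfolding proper_cont_map_def by auto
  have gc: "continuous_on UNIV g"
    using continuous_on_snd[OF Gc] by simp
  have g3: False if "x < y" "y < z" "g (e,x) = g (e,y)" "g (e,y) = g (e,z)" for e x y z
    using assms(2) that
    apply (simp only: not_ex)
    apply (erule allE[of _ "(e, g (e,x))"], erule allE[of _ "(e,x)"], erule allE[of _ "(e,y)"], erule allE[of _ "(e,z)"])
    by auto
  have gpa: "\<forall>K. compact K \<longrightarrow> compact (fibre_map g -` K)" using gp by blast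
  have g3a: "\<forall>e x y z. x < y \<longrightarrow> y < z \<longrightarrow> g (e,x) = g (e,y) \<longrightarrow> g (e,y) = g (e,z) \<longrightarrow> False"
    using g3 by blast
  show ?thesis
  proof (intro conjI impI)
    assume "\<exists>x1 x2. x1 \<noteq> x2 \<and> fibre_map g x1 = fibre_map g x2"
    then obtain x1 x2 where x: "x1 \<noteq> x2" "fibre_map g x1 = fibre_map g x2" by blast
    obtain e s1 where x1: "x1 = (e,s1)" by (cases x1)
    obtain s2 where x2: "x2 = (e,s2)" using x x1 by (cases x2) auto
    have ne: "s1 \<noteq> s2" and geq: "g (e,s1) = g (e,s2)" using x x1 x2 by auto
    obtain a b where ab: "a < b" "g (e,a) = g (e,b)"
    proof (cases "s1 < s2")
      case True then show ?thesis using that geq by blast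
    next
      case False then have "s2 < s1" using ne by simp
      then show ?thesis using that geq by metis
    qed
    have "hump (\<lambda>t. g (e,t)) \<or> hump (\<lambda>t. - g (e,t))"
      by (rule hump_or_dip[OF wrap(1)[OF gc gpa g3a] ab])
    then show "global_fold (fibre_map g)"
    proof
      assume "hump (\<lambda>t. g (e,t))"
      then show ?thesis by (rule wrap(2)[OF gc gpa g3a])
    next
      assume dip: "hump (\<lambda>t. - g (e,t))"
      define g' where "g' = (\<lambda>x. - g x)"
      have gc': "continuous_on UNIV g'" unfolding g'_def by (intro continuous_intros gc)
      have gp': "compact (fibre_map g' -` K)" if "compact K" for K
      proof -
        have "compact (reflR ` K)"
          by (rule compact_continuous_image[OF _ that]) (unfold reflR_def, intro continuous_intros)
        then have "compact (fibre_map g -` (reflR ` K))" by (rule gp)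
        moreover have "fibre_map g -` (reflR ` K) = fibre_map g' -` K"
        proof (rule set_eqI)
          fix x
          have "fibre_map g x \<in> reflR ` K \<longleftrightarrow> reflR (fibre_map g x) \<in> K"
            by (metis image_eqI imageE reflR_invol)
          then show "x \<in> fibre_map g -` (reflR ` K) \<longleftrightarrow> x \<in> fibre_map g' -` K"
            unfolding g'_def neg_fm by simp
        qed
        ultimately show ?thesis by simp
      qed
      have g3': False if "x < y" "y < z" "g' (e,x) = g' (e,y)" "g' (e,y) = g' (e,z)" for e x y z
        using g3[of x y z e] that by (simp add: g'_def)
      have "hump (\<lambda>t. g' (e,t))" using dip by (simp add: g'_def)
      moreover have "\<forall>K. compact K \<longrightarrow> compact (fibre_map g' -` K)" using gp' by blast
      moreover have "\<forall>e x y z. x < y \<longrightarrow> y < z \<longrightarrow> g' (e,x) = g' (e,y) \<longrightarrow> g' (e,y) = g' (e,z) \<longrightarrow> False"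
        using g3' by blast
      ultimately have "global_fold (fibre_map g')" using wrap(2)[OF gc'] by blast
      then show ?thesis using fold_transfer unfolding g'_def by blast
    qed
  next
    assume ni: "\<not> (\<exists>x1 x2. x1 \<noteq> x2 \<and> fibre_map g x1 = fibre_map g x2)"
    then have injG: "inj (fibre_map g)" unfolding inj_def by blast
    have surjG: "surj (fibre_map g)"
    proof -
      have "y \<in> range (fibre_map g)" for y
      proof -
        obtain e v where ye: "y = (e,v)" by (cases y)
        define h where "h = (\<lambda>t. g (e,t))"
        have hc: "continuous_on UNIV h" unfolding h_def by (rule sec_cont_gen(1)[OF gc])
        have hinj: "inj h"
        proof (rule injI)
          fix s t assume "h s = h t"
          then have "fibre_map g (e,s) = fibre_map g (e,t)" by (simp add: h_def)
          then show "s = t" using injD[OF injG] by blast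
        qed
        have "open (h ` UNIV)"
          by (rule injective_into_1d_imp_open_map_UNIV[OF open_UNIV hc]) (use hinj in auto)
        moreover have "closed (h ` UNIV)"
        proof (rule proper_closed[OF hc _ closed_UNIV])
          fix K :: "real set" assume "compact K"
          then obtain B where B: "\<And>x. x \<in> K \<Longrightarrow> norm x \<le> B" using compact_imp_bounded bounded_iff by metis
          have "K \<subseteq> {-B..B}" using B by (force simp: abs_le_iff)
          then have "h -` K \<subseteq> h -` {-B..B}" by auto
          moreover have "bounded (h -` {-B..B})" using wrap(1)[OF gc gpa g3a, of e] unfolding good1_def h_def by blast
          ultimately have "bounded (h -` K)" using bounded_subset by blast
          moreover have "closed (h -` K)"
            using hc compact_imp_closed[OF \<open>compact K\<close>] unfolding continuous_on_closed_vimage[OF closed_UNIV] by auto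
          ultimately show "compact (h -` K)" by (simp add: compact_eq_bounded_closed)
        qed
        ultimately have "h ` UNIV = UNIV" using clopen[of "h ` UNIV"] by auto
        then obtain t where "h t = v" by (metis UNIV_I imageE)
        then have "fibre_map g (e,t) = y" using ye by (simp add: h_def)
        then show ?thesis by (metis rangeI)
      qed
      then show ?thesis by blast
    qed
    show "is_homeo (fibre_map g)"
      using homeo_of_proper_bij[of "fibre_map g"] Gc gp bijI[OF injG surjG] by blast
  qed
qed

end
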